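(* Let $\mathbb{F}$ be a field of characteristic $2$ and $n\ge 1$. Let $A \in \operatorname{M}_n(\mathbb{F})$ be an invertible alternating matrix, and set $S := \begin{bmatrix} 1 & 0_{1\times n} \\ 0_{n\times 1} & A\end{bmatrix}$. Let $M \in \operatorname{M}_n(\mathbb{F})$ be nilpotent and $A$-symmetric. Then the following are equivalent: (i) $M$ is $A$-alternating; (ii) for every $X \in \mathbb{F}^n$, the matrix $M_X := \begin{bmatrix} 0 & X^T A^T \\ X & M \end{bmatrix} \in \operatorname{M}_{n+1}(\mathbb{F})$ is nilpotent. Moreover, if (i) holds then $M_X$ is $S$-alternating for every $X \in \mathbb{F}^n$.
   Context: A square matrix $A$ is alternating if $X^T A X = 0$ for all column vectors $X$ (in characteristic $2$: symmetric with zero diagonal). Given square matrices $B$ and $M$ of the same size, $M$ is $B$-symmetric (resp. $B$-alternating) if $BM$ is symmetric (resp. alternating). *)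

theory Defs
  imports "Jordan_Normal_Form.Matrix"
begin

definition alternating_mat :: "'a::comm_ring_1 mat \<Rightarrow> bool" where
  "alternating_mat A \<longleftrightarrow> square_mat A \<and>
     (\<forall>X \<in> carrier_vec (dim_row A). X \<bullet> (A *\<^sub>v X) = 0)"

definition symmetric_mat :: "'a mat \<Rightarrow> bool" where
  "symmetric_mat A \<longleftrightarrow> transpose_mat A = A"

definition B_symmetric :: "'a::semiring_0 mat \<Rightarrow> 'a mat \<Rightarrow> bool" where
  "B_symmetric B M \<longleftrightarrow> symmetric_mat (B * M)"

definition B_alternating :: "'a::comm_ring_1 mat \<Rightarrow> 'a mat \<Rightarrow> bool" where
  "B_alternating B M \<longleftrightarrow> alternating_mat (B * M)"

definition nilpotent_mat :: "'a::semiring_1 mat \<Rightarrow> bool" where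
  "nilpotent_mat M \<longleftrightarrow> (\<exists>k. M ^\<^sub>m k = 0\<^sub>m (dim_row M) (dim_col M))"

definition col_mat :: "'a vec \<Rightarrow> 'a mat" where
  "col_mat X = mat_of_cols (dim_vec X) [X]"

definition MX :: "'a::semiring_1 mat \<Rightarrow> 'a mat \<Rightarrow> 'a vec \<Rightarrow> 'a mat" where
  "MX A M X = four_block_mat (0\<^sub>m 1 1) (transpose_mat (col_mat X) * transpose_mat A)
                            (col_mat X) M"

end

theory Submission imports Defs begin

definition emb2 :: "nat \<Rightarrow> 'a \<Rightarrow> 'a vec \<Rightarrow> 'a vec" where
  "emb2 n s v = vec (Suc n) (\<lambda>i. if i = 0 then s else v $ (i - 1))"

lemma emb2_carrier[simp]: "emb2 n s v \<in> carrier_vec (Suc n)"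
  by (simp add: emb2_def)

lemma emb2_dim[simp]: "dim_vec (emb2 n s v) = Suc n"
  by (simp add: emb2_def)

lemma sum_shift1: "(\<Sum>j<Suc n. f j) = f 0 + (\<Sum>j<n. f (Suc j))"
  by (rule sum.lessThan_Suc_shift)

lemma fb_mult:
  fixes P B C D :: "'a::comm_ring_1 mat"
  assumes P: "P \<in> carrier_mat 1 1" and B: "B \<in> carrier_mat 1 n" and C: "C \<in> carrier_mat n 1"
    and D: "D \<in> carrier_mat n n" and v: "v \<in> carrier_vec n"
  shows "four_block_mat P B C D *\<^sub>v emb2 n s v
     = emb2 n (P $$ (0,0) * s + row B 0 \<bullet> v) (s \<cdot>\<^sub>v col C 0 + D *\<^sub>v v)"
proof (rule eq_vecI)
  show "dim_vec (four_block_mat P B C D *\<^sub>v emb2 n s v) = dim_vec (emb2 n (P $$ (0,0) * s + row B 0 \<bullet> v) (s \<cdot>\<^sub>v col C 0 + D *\<^sub>v v))"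
    using P D by simp
  fix i assume "i < dim_vec (emb2 n (P $$ (0,0) * s + row B 0 \<bullet> v) (s \<cdot>\<^sub>v col C 0 + D *\<^sub>v v))"
  hence i: "i < Suc n" by simp
  have "(four_block_mat P B C D *\<^sub>v emb2 n s v) $ i = (\<Sum>j<Suc n. four_block_mat P B C D $$ (i,j) * emb2 n s v $ j)"
    using i P D by (simp add: mult_mat_vec_def scalar_prod_def atLeast0LessThan)
  also have "\<dots> = four_block_mat P B C D $$ (i,0) * s + (\<Sum>j<n. four_block_mat P B C D $$ (i,Suc j) * v $ j)"
    unfolding sum_shift1 by (simp add: emb2_def)
  also have "\<dots> = emb2 n (P $$ (0,0) * s + row B 0 \<bullet> v) (s \<cdot>\<^sub>v col C 0 + D *\<^sub>v v) $ i"
  proof (cases "i = 0")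
    case True
    then show ?thesis using P B C D v i
      by (simp add: emb2_def scalar_prod_def atLeast0LessThan mult.commute)
  next
    case False
    then show ?thesis using P B C D v i
      by (simp add: emb2_def scalar_prod_def atLeast0LessThan mult.commute mult_mat_vec_def)
  qed
  finally show "(four_block_mat P B C D *\<^sub>v emb2 n s v) $ i = emb2 n (P $$ (0,0) * s + row B 0 \<bullet> v) (s \<cdot>\<^sub>v col C 0 + D *\<^sub>v v) $ i" .
qed


lemma emb2_add: "v \<in> carrier_vec n \<Longrightarrow> w \<in> carrier_vec n \<Longrightarrow>
  emb2 n s v + emb2 n t w = emb2 n (s + t) (v + w)"
  by (rule eq_vecI, auto simp: emb2_def)

lemma emb2_smult: "v \<in> carrier_vec n \<Longrightarrow> a \<cdot>\<^sub>v emb2 n s v = emb2 n (a * s) (a \<cdot>\<^sub>v v)"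
  by (rule eq_vecI, auto simp: emb2_def)

lemma emb2_zero: "emb2 n 0 (0\<^sub>v n) = 0\<^sub>v (Suc n)"
  by (rule eq_vecI, auto simp: emb2_def)

lemma emb2_decomp: "v \<in> carrier_vec n \<Longrightarrow> emb2 n (s::'a::semiring_1) v = s \<cdot>\<^sub>v emb2 n 1 (0\<^sub>v n) + emb2 n 0 v"
  by (rule eq_vecI, auto simp: emb2_def)

lemma emb2_surj: "u \<in> carrier_vec (Suc n) \<Longrightarrow> u = emb2 n (u $ 0) (vec n (\<lambda>i. u $ Suc i))"
  by (rule eq_vecI, auto simp: emb2_def)

lemma emb2_scalar: "v \<in> carrier_vec n \<Longrightarrow> w \<in> carrier_vec n \<Longrightarrow>
  emb2 n s v \<bullet> emb2 n t w = s * t + v \<bullet> w"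
  by (simp add: scalar_prod_def emb2_def atLeast0LessThan sum_shift1 del: sum.lessThan_Suc)

lemma mat_zero_vec:
  fixes B :: "'a::semiring_1 mat"
  assumes B: "B \<in> carrier_mat m k" and h: "\<And>u. u \<in> carrier_vec k \<Longrightarrow> B *\<^sub>v u = 0\<^sub>v m"
  shows "B = 0\<^sub>m m k"
proof (rule eq_matI)
  fix i j assume i: "i < dim_row (0\<^sub>m m k :: 'a mat)" and j: "j < dim_col (0\<^sub>m m k :: 'a mat)"
  have "B $$ (i,j) = (B *\<^sub>v unit_vec k j) $ i" using B i j by simp
  also have "\<dots> = 0" using h[of "unit_vec k j"] i j by simp
  finally show "B $$ (i,j) = (0\<^sub>m m k :: 'a mat) $$ (i,j)" using i j by simp
qed (use B in auto)

lemma powv: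
  assumes N: "(N::'a::semiring_1 mat) \<in> carrier_mat d d" and u: "u \<in> carrier_vec d"
  shows "N ^\<^sub>m (Suc k) *\<^sub>v u = N ^\<^sub>m k *\<^sub>v (N *\<^sub>v u)"
  using assoc_mult_mat_vec[OF pow_carrier_mat[OF N] N u] by simp

lemma powv2:
  assumes N: "(N::'a::semiring_1 mat) \<in> carrier_mat d d" and u: "u \<in> carrier_vec d"
  shows "N ^\<^sub>m (Suc k) *\<^sub>v u = N *\<^sub>v (N ^\<^sub>m k *\<^sub>v u)"
  using u
proof (induction k arbitrary: u)
  case 0
  then show ?case using N by simp
next
  case (Suc k)
  have "N ^\<^sub>m Suc (Suc k) *\<^sub>v u = N ^\<^sub>m (Suc k) *\<^sub>v (N *\<^sub>v u)" using powv[OF N Suc.prems] .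
  also have "\<dots> = N *\<^sub>v (N ^\<^sub>m k *\<^sub>v (N *\<^sub>v u))" using Suc.IH[of "N *\<^sub>v u"] N Suc.prems by (simp del: pow_mat.simps)
  also have "\<dots> = N *\<^sub>v (N ^\<^sub>m (Suc k) *\<^sub>v u)" using powv[OF N Suc.prems] by (simp del: pow_mat.simps)
  finally show ?case .
qed

lemma pow_addv:
  assumes N: "(N::'a::semiring_1 mat) \<in> carrier_mat d d" and u: "u \<in> carrier_vec d"
  shows "N ^\<^sub>m (a + b) *\<^sub>v u = N ^\<^sub>m a *\<^sub>v (N ^\<^sub>m b *\<^sub>v u)"
proof (induction a)
  case 0
  have "N ^\<^sub>m b *\<^sub>v u \<in> carrier_vec d" using N u by (metis mult_mat_vec_carrier pow_carrier_mat)
  then show ?case using N u by simp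
next
  case (Suc a)
  have "N ^\<^sub>m (Suc a + b) *\<^sub>v u = N *\<^sub>v (N ^\<^sub>m (a + b) *\<^sub>v u)" using powv2[OF N u] by simp
  also have "\<dots> = N *\<^sub>v (N ^\<^sub>m a *\<^sub>v (N ^\<^sub>m b *\<^sub>v u))" using Suc by simp
  also have "\<dots> = N ^\<^sub>m (Suc a) *\<^sub>v (N ^\<^sub>m b *\<^sub>v u)" 
    by (rule sym, rule powv2[OF N], metis N u mult_mat_vec_carrier pow_carrier_mat)
  finally show ?case .
qed

lemma powv_zero:
  assumes N: "(N::'a::semiring_1 mat) \<in> carrier_mat d d"
  shows "N ^\<^sub>m k *\<^sub>v 0\<^sub>v d = 0\<^sub>v d"
  using N by (intro eq_vecI) auto


lemma col_mat_carrier: "Y \<in> carrier_vec n \<Longrightarrow> col_mat Y \<in> carrier_mat n 1"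
  unfolding col_mat_def using mat_of_cols_carrier(1)[of n "[Y]"] by auto

lemma col_col_mat: "Y \<in> carrier_vec n \<Longrightarrow> col (col_mat Y) 0 = Y"
  by (simp add: col_mat_def)

lemma row_B:
  fixes A :: "'a::comm_ring_1 mat"
  assumes A: "A \<in> carrier_mat n n" and Y: "Y \<in> carrier_vec n"
  shows "row (transpose_mat (col_mat Y) * transpose_mat A) 0 = A *\<^sub>v Y"
proof (rule eq_vecI)
  fix j assume "j < dim_vec (A *\<^sub>v Y)"
  hence j: "j < n" using A by simp
  have "row (transpose_mat (col_mat Y) * transpose_mat A) 0 $ j = col (col_mat Y) 0 \<bullet> row A j"
    using A Y j col_mat_carrier[OF Y] by simp
  also have "\<dots> = row A j \<bullet> Y" using col_col_mat[OF Y] comm_scalar_prod[of Y n "row A j"] A Y j by simp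
  also have "\<dots> = (A *\<^sub>v Y) $ j" using A j by simp
  finally show "row (transpose_mat (col_mat Y) * transpose_mat A) 0 $ j = (A *\<^sub>v Y) $ j" .
qed (use A Y col_mat_carrier[OF Y] in simp)

lemma MX_carrier:
  assumes A: "A \<in> carrier_mat n n" and M: "M \<in> carrier_mat n n" and Y: "Y \<in> carrier_vec n"
  shows "MX A M Y \<in> carrier_mat (Suc n) (Suc n)"
  unfolding MX_def using four_block_carrier_mat[of "0\<^sub>m 1 1" 1 1 M n n] A M Y col_mat_carrier[OF Y]
  by simp

lemma MX_step:
  fixes A :: "'a::comm_ring_1 mat"
  assumes A: "A \<in> carrier_mat n n" and M: "M \<in> carrier_mat n n" and Y: "Y \<in> carrier_vec n"
    and v: "v \<in> carrier_vec n"
  shows "MX A M Y *\<^sub>v emb2 n s v = emb2 n ((A *\<^sub>v Y) \<bullet> v) (s \<cdot>\<^sub>v Y + M *\<^sub>v v)"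
proof -
  have "MX A M Y *\<^sub>v emb2 n s v = emb2 n ((0\<^sub>m 1 1 :: 'a mat) $$ (0,0) * s + row (transpose_mat (col_mat Y) * transpose_mat A) 0 \<bullet> v) (s \<cdot>\<^sub>v col (col_mat Y) 0 + M *\<^sub>v v)"
    unfolding MX_def by (rule fb_mult, use A M Y v col_mat_carrier[OF Y] in auto)
  then show ?thesis using row_B[OF A Y] col_col_mat[OF Y] by simp
qed


lemma mzero: "M \<in> carrier_mat n n \<Longrightarrow> M *\<^sub>v 0\<^sub>v n = (0\<^sub>v n :: 'a::semiring_0 vec)"
  by (rule eq_vecI, auto)

lemma zsmult_add: "Y \<in> carrier_vec n \<Longrightarrow> w \<in> carrier_vec n \<Longrightarrow> (0::'a::semiring_0) \<cdot>\<^sub>v Y + w = w"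
  by (rule eq_vecI, auto)

lemma smult_0v[simp]: "(t::'a::semiring_0) \<cdot>\<^sub>v 0\<^sub>v n = 0\<^sub>v n"
  by (rule eq_vecI, auto)

lemma zero_mat_vec: "v \<in> carrier_vec n \<Longrightarrow> (0\<^sub>m m n :: 'a::semiring_0 mat) *\<^sub>v v = 0\<^sub>v m"
  by (rule eq_vecI, auto)

lemma comp0: "x \<in> carrier_vec (Suc n) \<Longrightarrow> y \<in> carrier_vec (Suc n) \<Longrightarrow>
  (t \<cdot>\<^sub>v x + y) $ 0 = (t::'a::semiring_0) * x $ 0 + y $ 0"
  by simp

lemma pow_lin:
  fixes N :: "'a::field mat"
  assumes N: "N \<in> carrier_mat d d" and u: "u \<in> carrier_vec d" and w: "w \<in> carrier_vec d"
  shows "N ^\<^sub>m k *\<^sub>v (t \<cdot>\<^sub>v u + w) = t \<cdot>\<^sub>v (N ^\<^sub>m k *\<^sub>v u) + N ^\<^sub>m k *\<^sub>v w"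
proof -
  have P: "N ^\<^sub>m k \<in> carrier_mat d d" using N by simp
  show ?thesis
    using mult_add_distrib_mat_vec[OF P, of "t \<cdot>\<^sub>v u" w] mult_mat_vec[OF P u, of t] u w by simp
qed

lemma nil_if_c0:
  fixes A M :: "'a::field mat"
  assumes A: "A \<in> carrier_mat n n" and M: "M \<in> carrier_mat n n" and Y: "Y \<in> carrier_vec n"
    and Mm: "M ^\<^sub>m m = 0\<^sub>m n n" and c: "\<And>j. (A *\<^sub>v Y) \<bullet> (M ^\<^sub>m j *\<^sub>v Y) = 0"
  shows "MX A M Y ^\<^sub>m (m + (m + 1)) = 0\<^sub>m (Suc n) (Suc n)"
proof -
  define N where "N = MX A M Y"
  define e where "e = emb2 n (1::'a) (0\<^sub>v n)"
  have N: "N \<in> carrier_mat (Suc n) (Suc n)" unfolding N_def by (rule MX_carrier[OF A M Y])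
  have e: "e \<in> carrier_vec (Suc n)" unfolding e_def by simp
  have MjY: "M ^\<^sub>m j *\<^sub>v Y \<in> carrier_vec n" for j using M Y by (metis mult_mat_vec_carrier pow_carrier_mat)
  have a: "N ^\<^sub>m (Suc j) *\<^sub>v e = emb2 n 0 (M ^\<^sub>m j *\<^sub>v Y)" for j
  proof (induction j)
    case 0
    have "N ^\<^sub>m (Suc 0) *\<^sub>v e = N *\<^sub>v e" using powv2[OF N e, of 0] N e by simp
    also have "\<dots> = emb2 n 0 Y" unfolding N_def e_def
      by (subst MX_step[OF A M Y], simp, use A M Y mzero[OF M] in simp)
    finally show ?case using Y M by simp
  next
    case (Suc j)
    have "N ^\<^sub>m (Suc (Suc j)) *\<^sub>v e = N *\<^sub>v (N ^\<^sub>m (Suc j) *\<^sub>v e)" by (rule powv2[OF N e])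
    also have "\<dots> = N *\<^sub>v emb2 n 0 (M ^\<^sub>m j *\<^sub>v Y)" using Suc by simp
    also have "\<dots> = emb2 n 0 (M *\<^sub>v (M ^\<^sub>m j *\<^sub>v Y))" unfolding N_def
      using MX_step[OF A M Y MjY[of j], of 0] c[of j] MjY[of j] M Y zsmult_add[OF Y, of "M *\<^sub>v (M ^\<^sub>m j *\<^sub>v Y)"] by simp
    also have "M *\<^sub>v (M ^\<^sub>m j *\<^sub>v Y) = M ^\<^sub>m (Suc j) *\<^sub>v Y" by (rule powv2[OF M Y, symmetric])
    finally show ?case .
  qed
  have b: "N ^\<^sub>m (m + 1) *\<^sub>v e = 0\<^sub>v (Suc n)"
  proof -
    have "(0\<^sub>m n n :: 'a mat) *\<^sub>v Y = 0\<^sub>v n" by (rule eq_vecI, use Y in auto)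
    then show ?thesis using a[of m] Mm emb2_zero[of n] by (simp del: pow_mat.simps)
  qed
  have bb: "N ^\<^sub>m (r + (m + 1)) *\<^sub>v e = 0\<^sub>v (Suc n)" for r
    using pow_addv[OF N e, of r "m+1"] b powv_zero[OF N] by simp
  have cc: "v \<in> carrier_vec n \<Longrightarrow> M ^\<^sub>m r *\<^sub>v v = 0\<^sub>v n \<Longrightarrow> N ^\<^sub>m (r + (m + 1)) *\<^sub>v emb2 n 0 v = 0\<^sub>v (Suc n)" for r v
  proof (induction r arbitrary: v)
    case 0
    then have "v = 0\<^sub>v n" using M by simp
    then show ?case using powv_zero[OF N] by (simp add: emb2_zero del: pow_mat.simps)
  next
    case (Suc r)
    have Mv: "M *\<^sub>v v \<in> carrier_vec n" using M Suc.prems by simp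
    have "N ^\<^sub>m (Suc r + (m + 1)) *\<^sub>v emb2 n 0 v = N ^\<^sub>m (r + (m + 1)) *\<^sub>v (N *\<^sub>v emb2 n 0 v)"
      using powv[OF N, of "emb2 n 0 v" "r + (m+1)"] by simp
    also have "N *\<^sub>v emb2 n 0 v = emb2 n ((A *\<^sub>v Y) \<bullet> v) (M *\<^sub>v v)"
      unfolding N_def using MX_step[OF A M Y Suc.prems(1), of 0] Y Mv zsmult_add[OF Y Mv] by simp
    also have "\<dots> = ((A *\<^sub>v Y) \<bullet> v) \<cdot>\<^sub>v e + emb2 n 0 (M *\<^sub>v v)"
      unfolding e_def by (rule emb2_decomp[OF Mv])
    also have "N ^\<^sub>m (r + (m + 1)) *\<^sub>v \<dots> = ((A *\<^sub>v Y) \<bullet> v) \<cdot>\<^sub>v (N ^\<^sub>m (r + (m + 1)) *\<^sub>v e) + N ^\<^sub>m (r + (m + 1)) *\<^sub>v emb2 n 0 (M *\<^sub>v v)"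
      by (rule pow_lin[OF N e], simp)
    also have "N ^\<^sub>m (r + (m + 1)) *\<^sub>v emb2 n 0 (M *\<^sub>v v) = 0\<^sub>v (Suc n)"
    proof (rule Suc.IH[OF Mv])
      show "M ^\<^sub>m r *\<^sub>v (M *\<^sub>v v) = 0\<^sub>v n" using powv[OF M Suc.prems(1), of r] Suc.prems(2) by simp
    qed
    finally show ?case using bb[of r] by simp
  qed
  have "N ^\<^sub>m (m + (m + 1)) = 0\<^sub>m (Suc n) (Suc n)"
  proof (rule mat_zero_vec)
    show "N ^\<^sub>m (m + (m + 1)) \<in> carrier_mat (Suc n) (Suc n)" by (rule pow_carrier_mat[OF N])
    fix u :: "'a vec" assume u: "u \<in> carrier_vec (Suc n)"
    define v where "v = vec n (\<lambda>i. u $ Suc i)"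
    have v: "v \<in> carrier_vec n" unfolding v_def by simp
    define s0 where "s0 = u $ 0"
    have ueq: "u = s0 \<cdot>\<^sub>v e + emb2 n 0 v" unfolding e_def v_def s0_def
      using emb2_surj[OF u] emb2_decomp[of "vec n (\<lambda>i. u $ Suc i)" n "u $ 0"] by simp
    have "N ^\<^sub>m (m + (m + 1)) *\<^sub>v u = s0 \<cdot>\<^sub>v (N ^\<^sub>m (m + (m + 1)) *\<^sub>v e) + N ^\<^sub>m (m + (m + 1)) *\<^sub>v emb2 n 0 v"
      unfolding ueq by (rule pow_lin[OF N e], simp)
    also have "N ^\<^sub>m (m + (m + 1)) *\<^sub>v emb2 n 0 v = 0\<^sub>v (Suc n)"
      by (rule cc[OF v], simp add: Mm v zero_mat_vec)
    finally show "N ^\<^sub>m (m + (m + 1)) *\<^sub>v u = 0\<^sub>v (Suc n)" using bb[of m] by (simp del: pow_mat.simps)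
  qed
  then show ?thesis unfolding N_def .
qed


lemma not_nil:
  fixes A M :: "'a::field mat"
  assumes A: "A \<in> carrier_mat n n" and M: "M \<in> carrier_mat n n" and Y: "Y \<in> carrier_vec n"
    and c0: "(A *\<^sub>v Y) \<bullet> Y = 0" and c1: "(A *\<^sub>v Y) \<bullet> (M *\<^sub>v Y) \<noteq> 0"
    and c2: "\<And>j. j \<ge> 2 \<Longrightarrow> (A *\<^sub>v Y) \<bullet> (M ^\<^sub>m j *\<^sub>v Y) = 0"
  shows "\<not> nilpotent_mat (MX A M Y)"
proof
  assume nil: "nilpotent_mat (MX A M Y)"
  define N where "N = MX A M Y"
  define e where "e = emb2 n (1::'a) (0\<^sub>v n)"
  define w where "w j = emb2 n (0::'a) (M ^\<^sub>m j *\<^sub>v Y)" for j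
  define \<gamma> where "\<gamma> = (A *\<^sub>v Y) \<bullet> (M *\<^sub>v Y)"
  have N: "N \<in> carrier_mat (Suc n) (Suc n)" unfolding N_def by (rule MX_carrier[OF A M Y])
  have e: "e \<in> carrier_vec (Suc n)" unfolding e_def by simp
  have w: "w j \<in> carrier_vec (Suc n)" for j unfolding w_def by simp
  have MjY: "M ^\<^sub>m j *\<^sub>v Y \<in> carrier_vec n" for j using M Y by (metis mult_mat_vec_carrier pow_carrier_mat)
  have Ne: "N *\<^sub>v e = w 0" unfolding N_def e_def w_def
    by (subst MX_step[OF A M Y], simp, use A M Y mzero[OF M] in simp)
  have Nw: "N *\<^sub>v w j = ((A *\<^sub>v Y) \<bullet> (M ^\<^sub>m j *\<^sub>v Y)) \<cdot>\<^sub>v e + w (Suc j)" for j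
  proof -
    have "N *\<^sub>v w j = emb2 n ((A *\<^sub>v Y) \<bullet> (M ^\<^sub>m j *\<^sub>v Y)) (M *\<^sub>v (M ^\<^sub>m j *\<^sub>v Y))"
      unfolding N_def w_def using MX_step[OF A M Y MjY[of j], of 0] Y M MjY[of j]
        zsmult_add[OF Y, of "M *\<^sub>v (M ^\<^sub>m j *\<^sub>v Y)"] by simp
    also have "M *\<^sub>v (M ^\<^sub>m j *\<^sub>v Y) = M ^\<^sub>m (Suc j) *\<^sub>v Y" by (rule powv2[OF M Y, symmetric])
    finally show ?thesis unfolding e_def w_def by (rule trans, intro emb2_decomp[OF MjY])
  qed
  have Nw2: "j \<ge> 2 \<Longrightarrow> N *\<^sub>v w j = w (Suc j)" for j
    using Nw[of j] c2[of j] zsmult_add[OF e w] by simp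
  have Nkw: "j \<ge> 2 \<Longrightarrow> N ^\<^sub>m k *\<^sub>v w j = w (j + k)" for j k
  proof (induction k arbitrary: j)
    case 0
    then show ?case using w N by simp
  next
    case (Suc k)
    have "N ^\<^sub>m (Suc k) *\<^sub>v w j = N ^\<^sub>m k *\<^sub>v (N *\<^sub>v w j)" by (rule powv[OF N w])
    also have "\<dots> = w (Suc j + k)" using Nw2[OF Suc.prems] Suc.IH[of "Suc j"] Suc.prems by simp
    finally show ?case by simp
  qed
  have w0: "w j $ 0 = 0" for j unfolding w_def emb2_def by simp
  have rec: "(N ^\<^sub>m (Suc (Suc (Suc k))) *\<^sub>v e) $ 0 = \<gamma> * (N ^\<^sub>m k *\<^sub>v e) $ 0" for k
  proof -
    have Nw0: "N *\<^sub>v w 0 = w 1" using Nw[of 0] c0 zsmult_add[OF e w] M Y by simp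
    have Nw1: "N *\<^sub>v w 1 = \<gamma> \<cdot>\<^sub>v e + w 2" using Nw[of 1] M Y unfolding \<gamma>_def by (simp add: numeral_2_eq_2)
    have "N ^\<^sub>m (Suc (Suc (Suc k))) *\<^sub>v e = N ^\<^sub>m (Suc (Suc k)) *\<^sub>v (N *\<^sub>v e)" by (rule powv[OF N e])
    also have "\<dots> = N ^\<^sub>m (Suc k) *\<^sub>v (N *\<^sub>v w 0)" unfolding Ne by (rule powv[OF N w])
    also have "\<dots> = N ^\<^sub>m k *\<^sub>v (N *\<^sub>v w 1)" unfolding Nw0 by (rule powv[OF N w])
    also have "\<dots> = \<gamma> \<cdot>\<^sub>v (N ^\<^sub>m k *\<^sub>v e) + N ^\<^sub>m k *\<^sub>v w 2" unfolding Nw1 by (rule pow_lin[OF N e w])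
    also have "\<dots> = \<gamma> \<cdot>\<^sub>v (N ^\<^sub>m k *\<^sub>v e) + w (2 + k)" using Nkw[of 2 k] by simp
    finally have eq: "N ^\<^sub>m (Suc (Suc (Suc k))) *\<^sub>v e = \<gamma> \<cdot>\<^sub>v (N ^\<^sub>m k *\<^sub>v e) + w (2 + k)" .
    have Nke: "N ^\<^sub>m k *\<^sub>v e \<in> carrier_vec (Suc n)" using N e by (metis mult_mat_vec_carrier pow_carrier_mat)
    show ?thesis unfolding eq comp0[OF Nke w] w0 by simp
  qed
  have pw: "(N ^\<^sub>m (3 * i) *\<^sub>v e) $ 0 = \<gamma> ^ i" for i
  proof (induction i)
    case 0
    then show ?case using N e by (simp add: e_def emb2_def)
  next
    case (Suc i)
    have "3 * Suc i = Suc (Suc (Suc (3 * i)))" by simp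
    then have "(N ^\<^sub>m (3 * Suc i) *\<^sub>v e) $ 0 = \<gamma> * (N ^\<^sub>m (3 * i) *\<^sub>v e) $ 0"
      using rec[of "3 * i"] by (simp only:)
    then show ?case using Suc by simp
  qed
  obtain K where K: "N ^\<^sub>m K = 0\<^sub>m (Suc n) (Suc n)"
    using nil N unfolding nilpotent_mat_def N_def by auto
  have "N ^\<^sub>m (2 * K + K) *\<^sub>v e = N ^\<^sub>m (2 * K) *\<^sub>v (N ^\<^sub>m K *\<^sub>v e)" by (rule pow_addv[OF N e])
  also have "\<dots> = 0\<^sub>v (Suc n)" unfolding K using zero_mat_vec[OF e] powv_zero[OF N] by simp
  finally have "(N ^\<^sub>m (3 * K) *\<^sub>v e) $ 0 = 0" by (simp add: mult.commute)
  then have "\<gamma> ^ K = 0" using pw by simp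
  then show False using c1 unfolding \<gamma>_def by simp
qed


lemma char2_add_self:
  fixes x :: "'a::field"
  assumes "CHAR('a) = 2"
  shows "x + x = 0"
proof -
  have h: "(of_nat CHAR('a) :: 'a) = 0" by (rule of_nat_CHAR)
  have h2: "(2::'a) = 0" using h unfolding assms by (metis of_nat_numeral)
  have "x + x = 2 * x" by (rule mult_2[symmetric])
  also have "\<dots> = 0" unfolding h2 by (rule mult_zero_left)
  finally show ?thesis .
qed

lemma alt_sym:
  fixes A :: "'a::field mat"
  assumes char2: "CHAR('a) = 2" and A: "A \<in> carrier_mat n n" and alt: "alternating_mat A"
  shows "transpose_mat A = A"
proof (rule eq_matI)
  have q: "x \<bullet> (A *\<^sub>v x) = 0" if "x \<in> carrier_vec n" for x
    using alt that A unfolding alternating_mat_def by auto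
  have bil: "(a + b) \<bullet> (A *\<^sub>v (a + b)) = a \<bullet> (A *\<^sub>v a) + a \<bullet> (A *\<^sub>v b) + b \<bullet> (A *\<^sub>v a) + b \<bullet> (A *\<^sub>v b)"
    if a: "a \<in> carrier_vec n" and b: "b \<in> carrier_vec n" for a b
  proof -
    have Aa: "A *\<^sub>v a \<in> carrier_vec n" and Ab: "A *\<^sub>v b \<in> carrier_vec n" using A a b by auto
    have "(a + b) \<bullet> (A *\<^sub>v (a + b)) = (a + b) \<bullet> (A *\<^sub>v a + A *\<^sub>v b)"
      using mult_add_distrib_mat_vec[OF A a b] by simp
    also have "\<dots> = a \<bullet> (A *\<^sub>v a + A *\<^sub>v b) + b \<bullet> (A *\<^sub>v a + A *\<^sub>v b)"
      by (rule add_scalar_prod_distrib[OF a b], use Aa Ab in auto)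
    also have "\<dots> = a \<bullet> (A *\<^sub>v a) + a \<bullet> (A *\<^sub>v b) + (b \<bullet> (A *\<^sub>v a) + b \<bullet> (A *\<^sub>v b))"
      using scalar_prod_add_distrib[OF a Aa Ab] scalar_prod_add_distrib[OF b Aa Ab] by simp
    finally show ?thesis by (simp add: add.assoc)
  qed
  have ent: "unit_vec n i \<bullet> (A *\<^sub>v unit_vec n j) = A $$ (i,j)" if "i < n" "j < n" for i j
    using that A by simp
  fix i j assume i: "i < dim_row A" and j: "j < dim_col A"
  have i': "i < n" and j': "j < n" using i j A by auto
  have d: "A $$ (k,k) = 0" if "k < n" for k using q[of "unit_vec n k"] ent[OF that that] by simp
  have "0 = A $$ (i,i) + A $$ (i,j) + A $$ (j,i) + A $$ (j,j)"
    using q[of "unit_vec n i + unit_vec n j"] bil[of "unit_vec n i" "unit_vec n j"] ent i' j' by simp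
  then have "A $$ (i,j) + A $$ (j,i) = 0" using d[OF i'] d[OF j'] by simp
  then have "A $$ (j,i) = - A $$ (i,j)" by (simp add: eq_neg_iff_add_eq_0 add.commute)
  also have "\<dots> = A $$ (i,j)" using char2_add_self[OF char2, of "A $$ (i,j)"] by (simp add: minus_unique)
  finally show "transpose_mat A $$ (i,j) = A $$ (i,j)" using i j A by simp
qed (use A in auto)


lemma adj1:
  fixes A M :: "'a::field mat"
  assumes A: "A \<in> carrier_mat n n" and M: "M \<in> carrier_mat n n"
    and At: "transpose_mat A = A" and sym: "transpose_mat (A * M) = A * M"
    and u: "u \<in> carrier_vec n" and w: "w \<in> carrier_vec n"
  shows "u \<bullet> (A *\<^sub>v (M *\<^sub>v w)) = (M *\<^sub>v u) \<bullet> (A *\<^sub>v w)"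
proof -
  have AM: "A * M \<in> carrier_mat n n" using A M by simp
  have Mu: "M *\<^sub>v u \<in> carrier_vec n" using M u by simp
  have "u \<bullet> (A *\<^sub>v (M *\<^sub>v w)) = u \<bullet> ((A * M) *\<^sub>v w)" using A M w by simp
  also have "\<dots> = (transpose_mat (A * M) *\<^sub>v u) \<bullet> w" by (rule transpose_vec_mult_scalar[OF AM w u, symmetric])
  also have "\<dots> = (A *\<^sub>v (M *\<^sub>v u)) \<bullet> w" unfolding sym using A M u by simp
  also have "\<dots> = (transpose_mat A *\<^sub>v (M *\<^sub>v u)) \<bullet> w" unfolding At ..
  also have "\<dots> = (M *\<^sub>v u) \<bullet> (A *\<^sub>v w)" by (rule transpose_vec_mult_scalar[OF A w Mu])
  finally show ?thesis .
qed

lemma adj_pow: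
  fixes A M :: "'a::field mat"
  assumes A: "A \<in> carrier_mat n n" and M: "M \<in> carrier_mat n n"
    and At: "transpose_mat A = A" and sym: "transpose_mat (A * M) = A * M"
  shows "u \<in> carrier_vec n \<Longrightarrow> w \<in> carrier_vec n \<Longrightarrow> u \<bullet> (A *\<^sub>v (M ^\<^sub>m i *\<^sub>v w)) = (M ^\<^sub>m i *\<^sub>v u) \<bullet> (A *\<^sub>v w)"
proof (induction i arbitrary: w)
  case 0
  then show ?case using M by simp
next
  case (Suc i)
  have Mw: "M *\<^sub>v w \<in> carrier_vec n" using M Suc.prems by simp
  have Miu: "M ^\<^sub>m i *\<^sub>v u \<in> carrier_vec n" using M Suc.prems by (metis mult_mat_vec_carrier pow_carrier_mat)
  have "u \<bullet> (A *\<^sub>v (M ^\<^sub>m Suc i *\<^sub>v w)) = u \<bullet> (A *\<^sub>v (M ^\<^sub>m i *\<^sub>v (M *\<^sub>v w)))"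
    using powv[OF M Suc.prems(2), of i] by simp
  also have "\<dots> = (M ^\<^sub>m i *\<^sub>v u) \<bullet> (A *\<^sub>v (M *\<^sub>v w))" using Suc.IH[OF Suc.prems(1) Mw] .
  also have "\<dots> = (M *\<^sub>v (M ^\<^sub>m i *\<^sub>v u)) \<bullet> (A *\<^sub>v w)" by (rule adj1[OF A M At sym Miu Suc.prems(2)])
  also have "M *\<^sub>v (M ^\<^sub>m i *\<^sub>v u) = M ^\<^sub>m Suc i *\<^sub>v u" by (rule powv2[OF M Suc.prems(1), symmetric])
  finally show ?case .
qed

lemma c_even:
  fixes A M :: "'a::field mat"
  assumes A: "A \<in> carrier_mat n n" and M: "M \<in> carrier_mat n n" and alt: "alternating_mat A"
    and At: "transpose_mat A = A" and sym: "transpose_mat (A * M) = A * M"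
    and Y: "Y \<in> carrier_vec n"
  shows "(A *\<^sub>v Y) \<bullet> (M ^\<^sub>m (i + i) *\<^sub>v Y) = 0"
proof -
  have MiY: "M ^\<^sub>m i *\<^sub>v Y \<in> carrier_vec n" using M Y by (metis mult_mat_vec_carrier pow_carrier_mat)
  have M2: "M ^\<^sub>m (i + i) *\<^sub>v Y \<in> carrier_vec n" using M Y by (metis mult_mat_vec_carrier pow_carrier_mat)
  have "(A *\<^sub>v Y) \<bullet> (M ^\<^sub>m (i + i) *\<^sub>v Y) = (transpose_mat A *\<^sub>v Y) \<bullet> (M ^\<^sub>m (i + i) *\<^sub>v Y)" unfolding At ..
  also have "\<dots> = Y \<bullet> (A *\<^sub>v (M ^\<^sub>m (i + i) *\<^sub>v Y))" by (rule transpose_vec_mult_scalar[OF A M2 Y])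
  also have "\<dots> = Y \<bullet> (A *\<^sub>v (M ^\<^sub>m i *\<^sub>v (M ^\<^sub>m i *\<^sub>v Y)))" using pow_addv[OF M Y, of i i] by simp
  also have "\<dots> = (M ^\<^sub>m i *\<^sub>v Y) \<bullet> (A *\<^sub>v (M ^\<^sub>m i *\<^sub>v Y))" by (rule adj_pow[OF A M At sym Y MiY])
  also have "\<dots> = 0" using alt MiY A unfolding alternating_mat_def by auto
  finally show ?thesis .
qed

lemma c_odd:
  fixes A M :: "'a::field mat"
  assumes A: "A \<in> carrier_mat n n" and M: "M \<in> carrier_mat n n"
    and At: "transpose_mat A = A" and sym: "transpose_mat (A * M) = A * M"
    and Y: "Y \<in> carrier_vec n"
  shows "(A *\<^sub>v Y) \<bullet> (M ^\<^sub>m (Suc (i + i)) *\<^sub>v Y) = (M ^\<^sub>m i *\<^sub>v Y) \<bullet> ((A * M) *\<^sub>v (M ^\<^sub>m i *\<^sub>v Y))"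
proof -
  have MiY: "M ^\<^sub>m i *\<^sub>v Y \<in> carrier_vec n" using M Y by (metis mult_mat_vec_carrier pow_carrier_mat)
  have MMiY: "M *\<^sub>v (M ^\<^sub>m i *\<^sub>v Y) \<in> carrier_vec n" using M MiY by simp
  have M2: "M ^\<^sub>m (Suc (i + i)) *\<^sub>v Y \<in> carrier_vec n" using M Y by (metis mult_mat_vec_carrier pow_carrier_mat)
  have "(A *\<^sub>v Y) \<bullet> (M ^\<^sub>m (Suc (i + i)) *\<^sub>v Y) = (transpose_mat A *\<^sub>v Y) \<bullet> (M ^\<^sub>m (Suc (i + i)) *\<^sub>v Y)" unfolding At ..
  also have "\<dots> = Y \<bullet> (A *\<^sub>v (M ^\<^sub>m (Suc (i + i)) *\<^sub>v Y))" by (rule transpose_vec_mult_scalar[OF A M2 Y])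
  also have "\<dots> = Y \<bullet> (A *\<^sub>v (M ^\<^sub>m i *\<^sub>v (M *\<^sub>v (M ^\<^sub>m i *\<^sub>v Y))))"
    using pow_addv[OF M Y, of i "Suc i"] powv2[OF M Y, of i] by simp
  also have "Y \<bullet> (A *\<^sub>v (M ^\<^sub>m i *\<^sub>v (M *\<^sub>v (M ^\<^sub>m i *\<^sub>v Y)))) = (M ^\<^sub>m i *\<^sub>v Y) \<bullet> (A *\<^sub>v (M *\<^sub>v (M ^\<^sub>m i *\<^sub>v Y)))"
    by (rule adj_pow[OF A M At sym Y MMiY])
  also have "\<dots> = (M ^\<^sub>m i *\<^sub>v Y) \<bullet> ((A * M) *\<^sub>v (M ^\<^sub>m i *\<^sub>v Y))" using A M MiY by simp
  finally show ?thesis .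
qed


lemma S_part:
  fixes A M :: "'a::field mat"
  assumes char2: "CHAR('a) = 2" and A: "A \<in> carrier_mat n n" and M: "M \<in> carrier_mat n n"
    and At: "transpose_mat A = A" and AMalt: "alternating_mat (A * M)" and X: "X \<in> carrier_vec n"
  shows "B_alternating (four_block_mat (1\<^sub>m 1) (0\<^sub>m 1 n) (0\<^sub>m n 1) A) (MX A M X)"
proof -
  define S where "S = four_block_mat (1\<^sub>m 1) (0\<^sub>m 1 n) (0\<^sub>m n 1) (A :: 'a mat)"
  define N where "N = MX A M X"
  have S: "S \<in> carrier_mat (Suc n) (Suc n)" unfolding S_def
    using four_block_carrier_mat[of "1\<^sub>m 1 :: 'a mat" 1 1 A n n] A by simp
  have N: "N \<in> carrier_mat (Suc n) (Suc n)" unfolding N_def by (rule MX_carrier[OF A M X])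
  have SN: "S * N \<in> carrier_mat (Suc n) (Suc n)" using S N by simp
  have Sstep: "S *\<^sub>v emb2 n t z = emb2 n t (A *\<^sub>v z)" if z: "z \<in> carrier_vec n" for t z
  proof -
    have "S *\<^sub>v emb2 n t z = emb2 n ((1\<^sub>m 1 :: 'a mat) $$ (0,0) * t + row (0\<^sub>m 1 n :: 'a mat) 0 \<bullet> z) (t \<cdot>\<^sub>v col (0\<^sub>m n 1 :: 'a mat) 0 + A *\<^sub>v z)"
      unfolding S_def by (rule fb_mult, use A z in auto)
    also have "row (0\<^sub>m 1 n :: 'a mat) 0 = 0\<^sub>v n" by (rule eq_vecI, auto)
    also have "col (0\<^sub>m n 1 :: 'a mat) 0 = 0\<^sub>v n" by (rule eq_vecI, auto)
    also have "t \<cdot>\<^sub>v 0\<^sub>v n + A *\<^sub>v z = A *\<^sub>v z" using A z by (intro eq_vecI, auto)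
    also have "0\<^sub>v n \<bullet> z = 0" using z by simp
    finally show ?thesis by simp
  qed
  have "alternating_mat (S * N)"
    unfolding alternating_mat_def
  proof (intro conjI ballI)
    show "square_mat (S * N)" using SN S N by simp
    fix u :: "'a vec" assume "u \<in> carrier_vec (dim_row (S * N))"
    then have u: "u \<in> carrier_vec (Suc n)" using SN S by simp
    define s where "s = u $ 0"
    define v where "v = vec n (\<lambda>i. u $ Suc i)"
    have v: "v \<in> carrier_vec n" unfolding v_def by simp
    have ueq: "u = emb2 n s v" unfolding s_def v_def by (rule emb2_surj[OF u])
    define t where "t = (A *\<^sub>v X) \<bullet> v"
    have z: "s \<cdot>\<^sub>v X + M *\<^sub>v v \<in> carrier_vec n" using X M v by simp
    have "(S * N) *\<^sub>v u = S *\<^sub>v (N *\<^sub>v u)" using S N u by simp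
    also have "N *\<^sub>v u = emb2 n t (s \<cdot>\<^sub>v X + M *\<^sub>v v)" unfolding ueq N_def t_def by (rule MX_step[OF A M X v])
    also have "S *\<^sub>v \<dots> = emb2 n t (A *\<^sub>v (s \<cdot>\<^sub>v X + M *\<^sub>v v))" by (rule Sstep[OF z])
    finally have SNu: "(S * N) *\<^sub>v u = emb2 n t (A *\<^sub>v (s \<cdot>\<^sub>v X + M *\<^sub>v v))" .
    have Az: "A *\<^sub>v (s \<cdot>\<^sub>v X + M *\<^sub>v v) = s \<cdot>\<^sub>v (A *\<^sub>v X) + A *\<^sub>v (M *\<^sub>v v)"
      using mult_add_distrib_mat_vec[OF A, of "s \<cdot>\<^sub>v X" "M *\<^sub>v v"] mult_mat_vec[OF A X, of s] X M v by simp
    have AX: "A *\<^sub>v X \<in> carrier_vec n" using A X by simp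
    have AMv: "A *\<^sub>v (M *\<^sub>v v) \<in> carrier_vec n" using A M v by simp
    have "u \<bullet> ((S * N) *\<^sub>v u) = emb2 n s v \<bullet> emb2 n t (A *\<^sub>v (s \<cdot>\<^sub>v X + M *\<^sub>v v))"
      unfolding SNu by (subst ueq, rule refl)
    also have "\<dots> = s * t + v \<bullet> (A *\<^sub>v (s \<cdot>\<^sub>v X + M *\<^sub>v v))"
      by (rule emb2_scalar[OF v], use A z in simp)
    also have "v \<bullet> (A *\<^sub>v (s \<cdot>\<^sub>v X + M *\<^sub>v v)) = s * (v \<bullet> (A *\<^sub>v X)) + v \<bullet> (A *\<^sub>v (M *\<^sub>v v))"
      unfolding Az using scalar_prod_add_distrib[of v n "s \<cdot>\<^sub>v (A *\<^sub>v X)" "A *\<^sub>v (M *\<^sub>v v)"] v AX AMv by simp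
    also have "v \<bullet> (A *\<^sub>v (M *\<^sub>v v)) = 0"
    proof -
      have "v \<bullet> (A *\<^sub>v (M *\<^sub>v v)) = v \<bullet> ((A * M) *\<^sub>v v)" using A M v by simp
      also have "\<dots> = 0" using AMalt v A M unfolding alternating_mat_def by simp
      finally show ?thesis .
    qed
    also have "v \<bullet> (A *\<^sub>v X) = t" unfolding t_def by (rule comm_scalar_prod[OF v AX])
    finally show "u \<bullet> ((S * N) *\<^sub>v u) = 0" using char2_add_self[OF char2, of "s * t"] by simp
  qed
  then show ?thesis unfolding B_alternating_def S_def N_def .
qed


theorem lemma3p1:
  fixes A M :: "'a::field mat" and n :: nat
  assumes char2: "CHAR('a) = 2"
    and n: "n \<ge> 1"
    and A: "A \<in> carrier_mat n n" and A_inv: "invertible_mat A" and A_alt: "alternating_mat A"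
    and M: "M \<in> carrier_mat n n" and M_nil: "nilpotent_mat M" and M_sym: "B_symmetric A M"
  shows "(B_alternating A M \<longleftrightarrow> (\<forall>X \<in> carrier_vec n. nilpotent_mat (MX A M X)))
    \<and> (B_alternating A M \<longrightarrow>
         (\<forall>X \<in> carrier_vec n.
            B_alternating (four_block_mat (1\<^sub>m 1) (0\<^sub>m 1 n) (0\<^sub>m n 1) A) (MX A M X)))"
proof -
  have At: "transpose_mat A = A" by (rule alt_sym[OF char2 A A_alt])
  have sym: "transpose_mat (A * M) = A * M" using M_sym unfolding B_symmetric_def symmetric_mat_def .
  have AM: "A * M \<in> carrier_mat n n" using A M by simp
  obtain m where Mm: "M ^\<^sub>m m = 0\<^sub>m n n" using M_nil M unfolding nilpotent_mat_def by auto
  have altAM: "B_alternating A M \<longleftrightarrow> (\<forall>v \<in> carrier_vec n. v \<bullet> ((A * M) *\<^sub>v v) = 0)"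
    unfolding B_alternating_def alternating_mat_def using AM A M by auto
  have MjY: "M ^\<^sub>m j *\<^sub>v Y \<in> carrier_vec n" if "Y \<in> carrier_vec n" for j Y
    using M that by (metis mult_mat_vec_carrier pow_carrier_mat)
  have fwd: "nilpotent_mat (MX A M X)" if alt: "B_alternating A M" and X: "X \<in> carrier_vec n" for X
  proof -
    have c: "(A *\<^sub>v X) \<bullet> (M ^\<^sub>m j *\<^sub>v X) = 0" for j
    proof (cases "even j")
      case True
      then obtain i where "j = i + i" by (metis evenE mult_2)
      then show ?thesis using c_even[OF A M A_alt At sym X, of i] by simp
    next
      case False
      then obtain i where "j = Suc (i + i)" by (metis oddE mult_2 Suc_eq_plus1)
      then show ?thesis using c_odd[OF A M At sym X, of i] alt altAM MjY[OF X, of i] by simp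
    qed
    have "MX A M X ^\<^sub>m (m + (m + 1)) = 0\<^sub>m (Suc n) (Suc n)" by (rule nil_if_c0[OF A M X Mm c])
    then have "\<exists>k. MX A M X ^\<^sub>m k = 0\<^sub>m (Suc n) (Suc n)" by (rule exI)
    then show ?thesis unfolding nilpotent_mat_def using MX_carrier[OF A M X] by (simp del: pow_mat.simps)
  qed
  have bwd: "B_alternating A M" if nil: "\<forall>X \<in> carrier_vec n. nilpotent_mat (MX A M X)"
  proof (rule ccontr)
    assume "\<not> B_alternating A M"
    then obtain X where X: "X \<in> carrier_vec n" and qX: "X \<bullet> ((A * M) *\<^sub>v X) \<noteq> 0"
      using altAM by auto
    define q where "q v = v \<bullet> ((A * M) *\<^sub>v v)" for v
    define R where "R = {r. q (M ^\<^sub>m r *\<^sub>v X) \<noteq> 0}"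
    have "0 \<in> R" unfolding R_def q_def using qX X M by simp
    have Rb: "R \<subseteq> {..<m}"
    proof
      fix r assume r: "r \<in> R"
      show "r \<in> {..<m}"
      proof (rule ccontr)
        assume "r \<notin> {..<m}"
        then have "r = (r - m) + m" by simp
        then have "M ^\<^sub>m r *\<^sub>v X = M ^\<^sub>m (r - m) *\<^sub>v (M ^\<^sub>m m *\<^sub>v X)"
          using pow_addv[OF M X, of "r - m" m] by simp
        also have "\<dots> = 0\<^sub>v n" unfolding Mm using zero_mat_vec[OF X] powv_zero[OF M] by simp
        finally have "q (M ^\<^sub>m r *\<^sub>v X) = 0" unfolding q_def using mzero[OF AM] by simp
        then show False using r unfolding R_def by simp
      qed
    qed
    have finR: "finite R" using Rb finite_subset by blast
    define r where "r = Max R"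
    have rR: "r \<in> R" unfolding r_def using finR \<open>0 \<in> R\<close> by (intro Max_in) auto
    have rmax: "q (M ^\<^sub>m (i + r) *\<^sub>v X) = 0" if "i \<ge> 1" for i
    proof (rule ccontr)
      assume "q (M ^\<^sub>m (i + r) *\<^sub>v X) \<noteq> 0"
      then have "i + r \<in> R" unfolding R_def by simp
      then have "i + r \<le> r" unfolding r_def using finR Max_ge by blast
      then show False using that by simp
    qed
    define Y where "Y = M ^\<^sub>m r *\<^sub>v X"
    have Y: "Y \<in> carrier_vec n" unfolding Y_def by (rule MjY[OF X])
    have MiY: "M ^\<^sub>m i *\<^sub>v Y = M ^\<^sub>m (i + r) *\<^sub>v X" for i
      unfolding Y_def using pow_addv[OF M X, of i r] by simp
    have AYt: "(A *\<^sub>v Y) \<bullet> w = Y \<bullet> (A *\<^sub>v w)" if "w \<in> carrier_vec n" for w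
      using transpose_vec_mult_scalar[OF A that Y] unfolding At .
    have c0: "(A *\<^sub>v Y) \<bullet> Y = 0"
      using AYt[OF Y] A_alt Y A unfolding alternating_mat_def by simp
    have c1: "(A *\<^sub>v Y) \<bullet> (M *\<^sub>v Y) \<noteq> 0"
    proof -
      have "(A *\<^sub>v Y) \<bullet> (M *\<^sub>v Y) = Y \<bullet> (A *\<^sub>v (M *\<^sub>v Y))" using AYt M Y by simp
      also have "\<dots> = q Y" unfolding q_def using A M Y by simp
      finally show ?thesis using rR unfolding R_def Y_def by simp
    qed
    have c2: "(A *\<^sub>v Y) \<bullet> (M ^\<^sub>m j *\<^sub>v Y) = 0" if j: "j \<ge> 2" for j
    proof (cases "even j")
      case True
      then obtain i where "j = i + i" by (metis evenE mult_2)
      then show ?thesis using c_even[OF A M A_alt At sym Y, of i] by simp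
    next
      case False
      then obtain i where ji: "j = Suc (i + i)" by (metis oddE mult_2 Suc_eq_plus1)
      then have i: "i \<ge> 1" using j by simp
      have "(A *\<^sub>v Y) \<bullet> (M ^\<^sub>m j *\<^sub>v Y) = q (M ^\<^sub>m i *\<^sub>v Y)"
        unfolding ji q_def by (rule c_odd[OF A M At sym Y])
      also have "\<dots> = 0" unfolding MiY by (rule rmax[OF i])
      finally show ?thesis .
    qed
    have "\<not> nilpotent_mat (MX A M Y)" by (rule not_nil[OF A M Y c0 c1 c2])
    then show False using nil Y by simp
  qed
  have S: "B_alternating A M \<longrightarrow> (\<forall>X \<in> carrier_vec n.
            B_alternating (four_block_mat (1\<^sub>m 1) (0\<^sub>m 1 n) (0\<^sub>m n 1) A) (MX A M X))"
    using S_part[OF char2 A M At] unfolding B_alternating_def by blast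
  show ?thesis using fwd bwd S by blast
qed

end
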